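(* Let $f:\mathbb{R}^n\to\mathbb{R}$ be differentiable with $\nabla f$ $L$-Lipschitz continuous, and let $\alpha_k$ be the quantities computed in Algorithm 3 (at iterations with $\nabla f(x^k)\ne0$), with $0\le\beta\le1$. Then for every $k$, $$\alpha_k\ge\alpha_{\min}:=\frac{(1-\beta)\left(1-\frac{L\overline{h}}{4}\right)+\beta(1-\nu)}{2+2\beta^2\nu^2}.$$
   Context: Algorithm 3: parameters $0<\mu<\nu<1$, $0<\underline{h}<1\le\gamma_0^0\le\overline{h}<\frac4L$, $0\le\beta\le1$, $\theta\in(0,1)$, $\tau>1$, $\eta\in(0,2)$, starting point $x^0$; run while $\nabla f(x^k)\neq0$. At iteration $k$: for $\gamma>0$ let $z^k(\gamma)=x^k-\gamma\nabla f(x^k)$ and $r_k(\gamma)=\gamma\|\nabla f(z^k(\gamma))-\nabla f(x^k)\|/\|z^k(\gamma)-x^k\|$; starting from $\gamma_0^k$, while $r_k(\gamma_l^k)>\nu$ set $\gamma_{l+1}^k=\gamma_l^k\theta\min\{1,1/r_k(\gamma_l^k)\}$; let $h_k$ be the first $\gamma_l^k$ with $r_k(\gamma_l^k)\le\nu$. Then $z^k=x^k-h_k\nabla f(x^k)$ and $x^{k+1}=x^k-\eta\alpha_kh_k\big(\nabla f(x^k)-\beta(\nabla f(x^k)-\nabla f(z^k))\big)$ with $$\alpha_k=\frac{(1-\beta)\left(1-\frac{Lh_k}{4}\right)\|x^k-z^k\|^2+\beta\langle x^k-z^k,h_k\nabla f(z^k)\rangle}{h_k^2\|\nabla f(x^k)-\beta(\nabla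 f(x^k)-\nabla f(z^k))\|^2};$$ finally $\gamma_0^{k+1}=\mathbf{P}_{[\underline{h},\overline{h}]}(\tau h_k)$ if $r_k(h_k)\le\mu$, else $\gamma_0^{k+1}=\mathbf{P}_{[\underline{h},\overline{h}]}(h_k)$, where $\mathbf{P}_{[a,b]}$ is projection onto $[a,b]$. *)

theory Defs
  imports "HOL-Analysis.Analysis"
begin

definition zpt :: "('a::real_normed_vector \<Rightarrow> 'a) \<Rightarrow> 'a \<Rightarrow> real \<Rightarrow> 'a" where
  "zpt g x \<gamma> = x - \<gamma> *\<^sub>R g x"

definition ratio :: "('a::real_normed_vector \<Rightarrow> 'a) \<Rightarrow> 'a \<Rightarrow> real \<Rightarrow> real" where
  "ratio g x \<gamma> = \<gamma> * norm (g (zpt g x \<gamma>) - g x) / norm (zpt g x \<gamma> - x)"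

primrec bt :: "('a::real_normed_vector \<Rightarrow> 'a) \<Rightarrow> real \<Rightarrow> 'a \<Rightarrow> real \<Rightarrow> nat \<Rightarrow> real" where
  "bt g \<theta> x \<gamma>0 0 = \<gamma>0"
| "bt g \<theta> x \<gamma>0 (Suc l) = bt g \<theta> x \<gamma>0 l * \<theta> * min 1 (1 / ratio g x (bt g \<theta> x \<gamma>0 l))"

definition step_h :: "('a::real_normed_vector \<Rightarrow> 'a) \<Rightarrow> real \<Rightarrow> real \<Rightarrow> 'a \<Rightarrow> real \<Rightarrow> real" where
  "step_h g \<nu> \<theta> x \<gamma>0 = bt g \<theta> x \<gamma>0 (LEAST l. ratio g x (bt g \<theta> x \<gamma>0 l) \<le> \<nu>)"

text \<open>alpha_k, given x = x^k, h = h_k and z = z^k = x^k - h_k grad f(x^k).\<close>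
definition alpha :: "('a::real_inner \<Rightarrow> 'a) \<Rightarrow> real \<Rightarrow> real \<Rightarrow> 'a \<Rightarrow> real \<Rightarrow> 'a \<Rightarrow> real" where
  "alpha g L \<beta> x h z =
     ((1 - \<beta>) * (1 - L * h / 4) * (norm (x - z))\<^sup>2 + \<beta> * inner (x - z) (h *\<^sub>R g z))
     / (h\<^sup>2 * (norm (g x - \<beta> *\<^sub>R (g x - g z)))\<^sup>2)"

definition proj_interval :: "real \<Rightarrow> real \<Rightarrow> real \<Rightarrow> real" where
  "proj_interval a b t = max a (min b t)"

end

theory Submission
  imports Defs
begin

lemma ratio_le:
  fixes g :: "'a::real_normed_vector \<Rightarrow> 'a"
  assumes lip: "L-lipschitz_on UNIV g" and t: "0 < t"
  shows "ratio g x t \<le> L * t"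
proof (cases "norm (zpt g x t - x) = 0")
  case True
  then show ?thesis using t lipschitz_on_nonneg[OF lip] by (simp add: ratio_def)
next
  case False
  have "norm (g (zpt g x t) - g x) \<le> L * norm (zpt g x t - x)"
    using lipschitz_onD[OF lip, of "zpt g x t" x] by (simp add: dist_norm)
  then have "t * norm (g (zpt g x t) - g x) \<le> t * (L * norm (zpt g x t - x))"
    using t by (simp add: mult_left_mono)
  then show ?thesis using False t
    by (simp add: ratio_def divide_le_eq mult_ac)
qed

lemma ratio_nonneg: "0 < t \<Longrightarrow> ratio g x t \<ge> 0"
  by (simp add: ratio_def)

lemma bt_exists:
  fixes g :: "'a::real_normed_vector \<Rightarrow> 'a"
  assumes lip: "L-lipschitz_on UNIV g" and \<gamma>: "0 < \<gamma>" and \<nu>: "0 < \<nu>"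
    and theta: "0 < \<theta>" "\<theta> < 1"
  shows "\<exists>l. ratio g x (bt g \<theta> x \<gamma> l) \<le> \<nu>"
proof (rule ccontr)
  assume "\<not> ?thesis"
  then have big: "\<And>l. ratio g x (bt g \<theta> x \<gamma> l) > \<nu>" by (meson not_le)
  have b: "0 < bt g \<theta> x \<gamma> l \<and> bt g \<theta> x \<gamma> l \<le> \<theta> ^ l * \<gamma>" for l
  proof (induction l)
    case 0
    then show ?case using \<gamma> by simp
  next
    case (Suc l)
    let ?b = "bt g \<theta> x \<gamma> l" and ?r = "ratio g x (bt g \<theta> x \<gamma> l)"
    have r: "?r > 0" using big[of l] \<nu> by linarith
    have m: "0 < min 1 (1 / ?r)" "min 1 (1 / ?r) \<le> 1" using r by auto
    have "?b * \<theta> * min 1 (1 / ?r) \<le> ?b * \<theta> * 1"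
      using m Suc theta by (intro mult_left_mono) auto
    also have "\<dots> \<le> \<theta> ^ Suc l * \<gamma>" using Suc theta by (simp add: mult_ac)
    finally show ?case using Suc theta m by simp
  qed
  have "(\<lambda>l. \<theta> ^ l * \<gamma> * L) \<longlonglongrightarrow> 0 * \<gamma> * L"
    by (intro tendsto_intros LIMSEQ_power_zero) (use theta in auto)
  then have "\<forall>\<^sub>F l in sequentially. \<theta> ^ l * \<gamma> * L < \<nu>"
    using \<nu> by (auto simp: order_tendsto_iff)
  then obtain l where l: "\<theta> ^ l * \<gamma> * L < \<nu>" by (meson eventually_sequentially order_refl)
  have L0: "0 \<le> L" using lipschitz_on_nonneg[OF lip] .
  have "ratio g x (bt g \<theta> x \<gamma> l) \<le> L * bt g \<theta> x \<gamma> l"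
    using ratio_le[OF lip] b[of l] by blast
  also have "\<dots> \<le> L * (\<theta> ^ l * \<gamma>)" using b[of l] L0 by (intro mult_left_mono) auto
  finally show False using l big[of l] by (simp add: mult_ac)
qed

lemma step_h_props:
  fixes g :: "'a::real_normed_vector \<Rightarrow> 'a"
  assumes lip: "L-lipschitz_on UNIV g" and \<gamma>: "0 < \<gamma>" and \<nu>: "0 < \<nu>"
    and theta: "0 < \<theta>" "\<theta> < 1"
  shows "0 < step_h g \<nu> \<theta> x \<gamma> \<and> step_h g \<nu> \<theta> x \<gamma> \<le> \<gamma>
     \<and> ratio g x (step_h g \<nu> \<theta> x \<gamma>) \<le> \<nu>"
proof -
  define m where "m = (LEAST l. ratio g x (bt g \<theta> x \<gamma> l) \<le> \<nu>)"
  have ex: "\<exists>l. ratio g x (bt g \<theta> x \<gamma> l) \<le> \<nu>" by (rule bt_exists[OF assms])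
  have rm: "ratio g x (bt g \<theta> x \<gamma> m) \<le> \<nu>" unfolding m_def using ex by (rule LeastI_ex)
  have lt: "j < m \<Longrightarrow> ratio g x (bt g \<theta> x \<gamma> j) > \<nu>" for j
    unfolding m_def using not_less_Least by force
  have b: "l \<le> m \<longrightarrow> 0 < bt g \<theta> x \<gamma> l \<and> bt g \<theta> x \<gamma> l \<le> \<gamma>" for l
  proof (induction l)
    case 0
    then show ?case using \<gamma> by simp
  next
    case (Suc l)
    show ?case
    proof
      assume sl: "Suc l \<le> m"
      let ?b = "bt g \<theta> x \<gamma> l" and ?r = "ratio g x (bt g \<theta> x \<gamma> l)"
      have IH: "0 < ?b" "?b \<le> \<gamma>" using Suc sl by auto
      have r: "?r > 0" using lt[of l] sl \<nu> by linarith
      have mm: "0 < min 1 (1 / ?r)" "min 1 (1 / ?r) \<le> 1" using r by auto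
      have "?b * \<theta> * min 1 (1 / ?r) \<le> ?b * \<theta> * 1"
        using mm IH theta by (intro mult_left_mono) auto
      also have "\<dots> \<le> ?b" using IH theta by (simp add: mult_left_le)
      also have "\<dots> \<le> \<gamma>" using IH by simp
      finally show "0 < bt g \<theta> x \<gamma> (Suc l) \<and> bt g \<theta> x \<gamma> (Suc l) \<le> \<gamma>"
        using IH theta mm by simp
    qed
  qed
  show ?thesis using b[of m] rm unfolding step_h_def m_def[symmetric] by simp
qed

theorem lemma7:
  fixes f :: "real ^ 'n \<Rightarrow> real" and g :: "real ^ 'n \<Rightarrow> real ^ 'n"
    and L \<mu> \<nu> hlo hhi \<beta> \<theta> \<tau> \<eta> :: real
    and xs :: "nat \<Rightarrow> real ^ 'n" and \<gamma>0 :: "nat \<Rightarrow> real" and k :: nat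
  assumes grad: "\<And>x. GDERIV f x :> g x"
    and lip: "L-lipschitz_on UNIV g" and L_pos: "0 < L"
    and mu_nu: "0 < \<mu>" "\<mu> < \<nu>" "\<nu> < 1"
    and h_bounds: "0 < hlo" "hlo < 1" "1 \<le> \<gamma>0 0" "\<gamma>0 0 \<le> hhi" "hhi < 4 / L"
    and beta: "0 \<le> \<beta>" "\<beta> \<le> 1"
    and theta: "0 < \<theta>" "\<theta> < 1"
    and tau: "1 < \<tau>"
    and eta: "0 < \<eta>" "\<eta> < 2"
    and x_step: "\<And>j. j < k \<Longrightarrow>
       xs (Suc j) = xs j -
         (\<eta> * alpha g L \<beta> (xs j) (step_h g \<nu> \<theta> (xs j) (\<gamma>0 j))
                (zpt g (xs j) (step_h g \<nu> \<theta> (xs j) (\<gamma>0 j)))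
            * step_h g \<nu> \<theta> (xs j) (\<gamma>0 j))
         *\<^sub>R (g (xs j) - \<beta> *\<^sub>R (g (xs j) - g (zpt g (xs j) (step_h g \<nu> \<theta> (xs j) (\<gamma>0 j)))))"
    and gamma_step: "\<And>j. j < k \<Longrightarrow>
       \<gamma>0 (Suc j) =
         (if ratio g (xs j) (step_h g \<nu> \<theta> (xs j) (\<gamma>0 j)) \<le> \<mu>
          then proj_interval hlo hhi (\<tau> * step_h g \<nu> \<theta> (xs j) (\<gamma>0 j))
          else proj_interval hlo hhi (step_h g \<nu> \<theta> (xs j) (\<gamma>0 j)))"
    and running: "\<And>j. j \<le> k \<Longrightarrow> g (xs j) \<noteq> 0"
  shows "alpha g L \<beta> (xs k) (step_h g \<nu> \<theta> (xs k) (\<gamma>0 k))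
            (zpt g (xs k) (step_h g \<nu> \<theta> (xs k) (\<gamma>0 k)))
         \<ge> ((1 - \<beta>) * (1 - L * hhi / 4) + \<beta> * (1 - \<nu>)) / (2 + 2 * \<beta>\<^sup>2 * \<nu>\<^sup>2)"
proof -
  have gk: "0 < \<gamma>0 k \<and> \<gamma>0 k \<le> hhi"
  proof (cases k)
    case 0 then show ?thesis using h_bounds by simp
  next
    case (Suc j)
    then show ?thesis using gamma_step[of j] h_bounds by (auto simp: proj_interval_def max_def min_def)
  qed
  define x where "x = xs k"
  define h where "h = step_h g \<nu> \<theta> x (\<gamma>0 k)"
  define d where "d = g x"
  define z where "z = zpt g x h"
  define e where "e = g z - d"
  have hp: "0 < h" "h \<le> hhi" and rh: "ratio g x h \<le> \<nu>"
    using step_h_props[OF lip, of "\<gamma>0 k" \<nu> \<theta> x] gk mu_nu theta unfolding h_def by auto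
  have d0: "d \<noteq> 0" using running[of k] unfolding d_def x_def by simp
  have nd: "norm d > 0" using d0 by simp
  have xz: "x - z = h *\<^sub>R d" by (simp add: z_def zpt_def d_def)
  have zx: "norm (z - x) = h * norm d" using xz hp
    by (metis norm_minus_commute norm_scaleR abs_of_pos)
  have "ratio g x h = norm e / norm d"
    using hp nd zx by (simp add: ratio_def e_def z_def[symmetric] d_def[symmetric])
  then have ne: "norm e \<le> \<nu> * norm d" using rh nd by (simp add: divide_le_eq)
  define n where "n = (norm d)\<^sup>2"
  have n0: "n > 0" using nd by (simp add: n_def)
  define N where "N = (1 - \<beta>) * (1 - L * hhi / 4) + \<beta> * (1 - \<nu>)"
  define C where "C = 2 + 2 * \<beta>\<^sup>2 * \<nu>\<^sup>2"
  have C0: "C > 0" unfolding C_def by (simp add: add_pos_nonneg)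
  have Lh: "L * hhi < 4" using h_bounds(5) L_pos by (simp add: field_simps)
  have Lh2: "L * h \<le> L * hhi" using hp L_pos by simp
  have N0: "N \<ge> 0" unfolding N_def using beta mu_nu Lh by (intro add_nonneg_nonneg mult_nonneg_nonneg) auto
  have inner_de: "inner d e \<ge> - (\<nu> * n)"
  proof -
    have "\<bar>inner d e\<bar> \<le> norm d * norm e" by (rule Cauchy_Schwarz_ineq2)
    also have "\<dots> \<le> norm d * (\<nu> * norm d)" using ne nd by (intro mult_left_mono) auto
    finally show ?thesis by (simp add: n_def power2_eq_square mult_ac)
  qed
  have num_eq: "(1 - \<beta>) * (1 - L * h / 4) * (norm (x - z))\<^sup>2 + \<beta> * inner (x - z) (h *\<^sub>R g z)
      = h\<^sup>2 * ((1 - \<beta>) * (1 - L * h / 4) * n + \<beta> * (n + inner d e))"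
    using hp unfolding xz e_def
    by (simp add: n_def power_mult_distrib inner_diff_right algebra_simps power2_eq_square
        flip: power2_norm_eq_inner)
  have a1: "(1 - \<beta>) * (1 - L * h / 4) * n \<ge> (1 - \<beta>) * (1 - L * hhi / 4) * n"
    using beta n0 Lh2 by (intro mult_right_mono mult_left_mono) auto
  have a2: "\<beta> * (n + inner d e) \<ge> \<beta> * ((1 - \<nu>) * n)"
    using beta inner_de by (intro mult_left_mono) (auto simp: algebra_simps)
  have num_ge: "(1 - \<beta>) * (1 - L * h / 4) * (norm (x - z))\<^sup>2 + \<beta> * inner (x - z) (h *\<^sub>R g z)
      \<ge> h\<^sup>2 * (n * N)"
  proof -
    have "n * N = (1 - \<beta>) * (1 - L * hhi / 4) * n + \<beta> * ((1 - \<nu>) * n)"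
      unfolding N_def by (simp add: algebra_simps)
    then have "n * N \<le> (1 - \<beta>) * (1 - L * h / 4) * n + \<beta> * (n + inner d e)"
      using a1 a2 by linarith
    then show ?thesis unfolding num_eq using hp by (intro mult_left_mono) auto
  qed
  have ge: "g x - \<beta> *\<^sub>R (g x - g z) = d + \<beta> *\<^sub>R e" by (simp add: d_def e_def algebra_simps)
  have nbe: "norm (\<beta> *\<^sub>R e) \<le> \<beta> * \<nu> * norm d" using ne beta
    by (simp add: mult_left_mono mult.assoc)
  have up: "norm (d + \<beta> *\<^sub>R e) \<le> (1 + \<beta> * \<nu>) * norm d"
    using norm_triangle_ineq[of d "\<beta> *\<^sub>R e"] nbe by (simp add: algebra_simps)
  have "\<beta> * \<nu> \<le> 1 * \<nu>" using beta mu_nu by (intro mult_right_mono) auto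
  then have bn: "\<beta> * \<nu> < 1" using mu_nu by linarith
  have lo: "norm (d + \<beta> *\<^sub>R e) \<ge> (1 - \<beta> * \<nu>) * norm d"
    using norm_triangle_ineq2[of d "- (\<beta> *\<^sub>R e)"] nbe by (simp add: algebra_simps)
  have "(1 - \<beta> * \<nu>) * norm d > 0" using bn nd by simp
  then have pos: "norm (d + \<beta> *\<^sub>R e) > 0" using lo by linarith
  have sq: "(norm (d + \<beta> *\<^sub>R e))\<^sup>2 \<le> ((1 + \<beta> * \<nu>) * norm d)\<^sup>2"
    using up pos by (intro power_mono) auto
  also have "\<dots> = (1 + \<beta> * \<nu>)\<^sup>2 * n" by (simp add: n_def power_mult_distrib)
  also have "\<dots> \<le> C * n" using n0 unfolding C_def
  proof (intro mult_right_mono)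
    have "0 \<le> (1 - \<beta> * \<nu>)\<^sup>2" by simp
    then show "(1 + \<beta> * \<nu>)\<^sup>2 \<le> 2 + 2 * \<beta>\<^sup>2 * \<nu>\<^sup>2"
      by (simp add: power2_eq_square algebra_simps)
  qed (use n0 in auto)
  finally have sq2: "(norm (d + \<beta> *\<^sub>R e))\<^sup>2 \<le> C * n" .
  define D where "D = h\<^sup>2 * (norm (d + \<beta> *\<^sub>R e))\<^sup>2"
  have D0: "D > 0" unfolding D_def using hp pos by simp
  have DC: "D \<le> h\<^sup>2 * (C * n)" unfolding D_def using sq2 by (intro mult_left_mono) auto
  have "N / C = h\<^sup>2 * (n * N) / (h\<^sup>2 * (C * n))" using hp n0 C0 by (simp add: field_simps)
  also have "\<dots> \<le> h\<^sup>2 * (n * N) / D"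
    using D0 DC N0 n0 hp by (intro divide_left_mono mult_nonneg_nonneg) auto
  also have "\<dots> \<le> alpha g L \<beta> x h z"
  proof -
    have Deq: "h\<^sup>2 * (norm (g x - \<beta> *\<^sub>R (g x - g z)))\<^sup>2 = D"
      by (simp only: D_def ge)
    show ?thesis unfolding alpha_def Deq
      using num_ge D0 by (intro divide_right_mono) auto
  qed
  finally show ?thesis unfolding N_def C_def x_def h_def z_def .
qed

end
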